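(* Let $m\ge2$, $k\ge2$, $n\ge1$, $\mathcal{A}\in\mathbb{R}_+^{[m,n]}$ and $\mathcal{B}\in\mathbb{R}_+^{[k,n]}$. Then \[r(\mathcal{A})(r(\mathcal{B}))^{m-1}\le\rho(\mathcal{A}\mathcal{B})\le R(\mathcal{A})(R(\mathcal{B}))^{m-1}.\]
   Context: $[n]=\{1,\ldots,n\}$. $\mathbb{R}_+^{[m,n]}$ denotes the set of order $m$, dimension $n$ tensors with nonnegative real entries. For a tensor $\mathcal{T}=(t_{i_1\cdots i_p})$ of order $p$ and dimension $n$: $r_i(\mathcal{T})=\sum_{i_2,\ldots,i_p=1}^n|t_{ii_2\cdots i_p}|$, $r(\mathcal{T})=\min_{i\in[n]}r_i(\mathcal{T})$, $R(\mathcal{T})=\max_{i\in[n]}r_i(\mathcal{T})$. General product: for $\mathcal{A}=(a_{i_1\cdots i_m})$ of order $m\ge2$ and $\mathcal{B}=(b_{i_1\cdots i_k})$ of order $k$, $\mathcal{A}\mathcal{B}=(c_{i\alpha_1\cdots\alpha_{m-1}})$ is the order $(m-1)(k-1)+1$, dimension $n$ tensor with $c_{i\alpha_1\cdots\alpha_{m-1}}=\sum_{i_2,\ldots,i_m=1}^n a_{ii_2\cdots i_m}b_{i_2\alpha_1}\cdots b_{i_m\alpha_{m-1}}$, $i\in[n]$, $\alpha_j\in[n]^{k-1}$ (where $b_{j\alpha}$ with $\alpha=(j_2,\ldots,j_k)$ means $b_{jj_2\cdots j_k}$). Eigenvalues of a tensor $\mathcal{T}$ of order $p\ge2$: $\lambda\in\mathbb{C}$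 such that there is a nonzero $x\in\mathbb{C}^n$ with $\sum_{i_2,\ldots,i_p=1}^n t_{ii_2\cdots i_p}x_{i_2}\cdots x_{i_p}=\lambda x_i^{p-1}$ for all $i\in[n]$; $\rho(\mathcal{T})$ is the maximum modulus of the eigenvalues. *)

theory Defs
  imports "HOL-Analysis.Analysis"
begin

(* A tensor of order p and dimension n is represented as a function on index lists;
   only its values on lists of length p with entries in {0..<n} matter
   (indices are 0-based: {0..<n} plays the role of [n]). *)

definition indices :: "nat \<Rightarrow> nat \<Rightarrow> nat list set" where
  "indices n p = {xs. length xs = p \<and> set xs \<subseteq> {..<n}}"

definition nonneg_tensor :: "nat \<Rightarrow> nat \<Rightarrow> (nat list \<Rightarrow> real) \<Rightarrow> bool" where
  "nonneg_tensor p n T \<longleftrightarrow> (\<forall>xs \<in> indices n p. T xs \<ge> 0)"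

definition row_sum :: "nat \<Rightarrow> nat \<Rightarrow> (nat list \<Rightarrow> real) \<Rightarrow> nat \<Rightarrow> real" where
  "row_sum p n T i = (\<Sum>xs\<in>indices n (p - 1). \<bar>T (i # xs)\<bar>)"

definition min_row_sum :: "nat \<Rightarrow> nat \<Rightarrow> (nat list \<Rightarrow> real) \<Rightarrow> real" where
  "min_row_sum p n T = Min ((row_sum p n T) ` {..<n})"

definition max_row_sum :: "nat \<Rightarrow> nat \<Rightarrow> (nat list \<Rightarrow> real) \<Rightarrow> real" where
  "max_row_sum p n T = Max ((row_sum p n T) ` {..<n})"

definition chunk :: "nat \<Rightarrow> nat list \<Rightarrow> nat \<Rightarrow> nat list" where
  "chunk l xs j = take l (drop (j * l) xs)"

(* General product AB of A (order m) and B (order k), dimension n; result has order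
   (m-1)(k-1)+1 and entry c_{i alpha_1 ... alpha_{m-1}} =
   sum_{i_2..i_m} a_{i i_2..i_m} b_{i_2 alpha_1} ... b_{i_m alpha_{m-1}} *)
definition gen_prod ::
  "nat \<Rightarrow> nat \<Rightarrow> nat \<Rightarrow> (nat list \<Rightarrow> real) \<Rightarrow> (nat list \<Rightarrow> real) \<Rightarrow> nat list \<Rightarrow> real" where
  "gen_prod m k n A B ys =
     (\<Sum>is\<in>indices n (m - 1).
        A (hd ys # is) * (\<Prod>j<m - 1. B ((is ! j) # chunk (k - 1) (tl ys) j)))"

definition tensor_eigenvalue :: "nat \<Rightarrow> nat \<Rightarrow> (nat list \<Rightarrow> real) \<Rightarrow> complex \<Rightarrow> bool" where
  "tensor_eigenvalue p n T lam \<longleftrightarrow>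
     (\<exists>x :: nat \<Rightarrow> complex. (\<exists>i<n. x i \<noteq> 0) \<and>
        (\<forall>i<n. (\<Sum>is\<in>indices n (p - 1). complex_of_real (T (i # is)) * (\<Prod>j<p - 1. x (is ! j)))
               = lam * x i ^ (p - 1)))"

definition tensor_spectral_radius :: "nat \<Rightarrow> nat \<Rightarrow> (nat list \<Rightarrow> real) \<Rightarrow> real" where
  "tensor_spectral_radius p n T = Sup (cmod ` {lam. tensor_eigenvalue p n T lam})"

end

theory Submission
  imports Defs
begin

lemma finite_indices: "finite (indices n p)"
  unfolding indices_def using finite_lists_length_eq[of "{..<n}" p] by (simp add: conj_commute)

lemma indices_0[simp]: "indices n 0 = {[]}"
  unfolding indices_def by auto

lemma indices_add: "indices n (a + b) = (\<lambda>(ys,zs). ys @ zs) ` (indices n a \<times> indices n b)"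
proof
  show "indices n (a + b) \<subseteq> (\<lambda>(ys,zs). ys @ zs) ` (indices n a \<times> indices n b)"
  proof
    fix xs assume "xs \<in> indices n (a+b)"
    then have "take a xs \<in> indices n a" "drop a xs \<in> indices n b"
      unfolding indices_def by (auto dest: in_set_takeD in_set_dropD)
    then show "xs \<in> (\<lambda>(ys,zs). ys @ zs) ` (indices n a \<times> indices n b)"
      by (intro image_eqI[of _ _ "(take a xs, drop a xs)"]) auto
  qed
  show "(\<lambda>(ys,zs). ys @ zs) ` (indices n a \<times> indices n b) \<subseteq> indices n (a + b)"
    unfolding indices_def by auto
qed

lemma inj_append_indices: "inj_on (\<lambda>(ys,zs). ys @ zs) (indices n a \<times> indices n b)"
  unfolding inj_on_def indices_def by auto

lemma chunk_0: "length ys = l \<Longrightarrow> chunk l (ys @ zs) 0 = ys"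
  unfolding chunk_def by simp

lemma chunk_Suc: "length ys = l \<Longrightarrow> chunk l (ys @ zs) (Suc j) = chunk l zs j"
  unfolding chunk_def by (simp add: add.commute)

lemma chunk_sum:
  "(\<Sum>xs\<in>indices n (c*l). \<Prod>j<c. g j (chunk l xs j)) = (\<Prod>j<c. \<Sum>zs\<in>indices n l. (g j zs :: real))"
proof (induction c arbitrary: g)
  case 0
  then show ?case by simp
next
  case (Suc c)
  have "(\<Sum>xs\<in>indices n (Suc c*l). \<Prod>j<Suc c. g j (chunk l xs j))
      = (\<Sum>xs\<in>indices n (l + c*l). \<Prod>j<Suc c. g j (chunk l xs j))" by simp
  also have "\<dots> = (\<Sum>(ys,zs)\<in>indices n l \<times> indices n (c*l). \<Prod>j<Suc c. g j (chunk l (ys@zs) j))"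
    unfolding indices_add by (subst sum.reindex[OF inj_append_indices]) (simp add: case_prod_unfold)
  also have "\<dots> = (\<Sum>(ys,zs)\<in>indices n l \<times> indices n (c*l). g 0 ys * (\<Prod>j<c. g (Suc j) (chunk l zs j)))"
    by (rule sum.cong) (auto simp only: prod.lessThan_Suc_shift chunk_0 chunk_Suc indices_def mem_Sigma_iff mem_Collect_eq split: prod.splits)
  also have "\<dots> = (\<Sum>ys\<in>indices n l. g 0 ys) * (\<Sum>zs\<in>indices n (c*l). \<Prod>j<c. g (Suc j) (chunk l zs j))"
    by (simp add: sum_product sum.cartesian_product)
  also have "\<dots> = (\<Sum>ys\<in>indices n l. g 0 ys) * (\<Prod>j<c. \<Sum>zs\<in>indices n l. g (Suc j) zs)"
    using Suc.IH[of "\<lambda>j. g (Suc j)"] by simp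
  also have "\<dots> = (\<Prod>j<Suc c. \<Sum>zs\<in>indices n l. g j zs)"
    by (simp only: prod.lessThan_Suc_shift)
  finally show ?case .
qed


lemma BW1:
  fixes s :: "nat \<Rightarrow> real"
  assumes "\<And>j. \<bar>s j\<bar> \<le> M"
  shows "\<exists>f l. strict_mono f \<and> (\<lambda>j. s (f j)) \<longlonglongrightarrow> l"
proof -
  obtain f where f: "strict_mono f" "monoseq (\<lambda>n. s (f n))" using seq_monosub by blast
  have "Bseq (\<lambda>n. s (f n))" using assms by (intro BseqI'[of _ M]) auto
  then have "convergent (\<lambda>n. s (f n))" using f(2) Bseq_monoseq_convergent by blast
  then show ?thesis using f(1) by (auto simp: convergent_def)
qed

lemma BW_n:
  fixes X :: "nat \<Rightarrow> nat \<Rightarrow> real"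
  assumes "\<And>j i. i < n \<Longrightarrow> \<bar>X j i\<bar> \<le> M"
  shows "\<exists>\<sigma> l. strict_mono \<sigma> \<and> (\<forall>i<n. (\<lambda>j. X (\<sigma> j) i) \<longlonglongrightarrow> l i)"
  using assms
proof (induction n)
  case 0
  show ?case by (rule exI[of _ id]) (auto simp: strict_mono_def)
next
  case (Suc n)
  then obtain \<sigma> l where \<sigma>: "strict_mono \<sigma>" "\<forall>i<n. (\<lambda>j. X (\<sigma> j) i) \<longlonglongrightarrow> l i" by auto
  obtain \<tau> a where \<tau>: "strict_mono \<tau>" "(\<lambda>j. X (\<sigma> (\<tau> j)) n) \<longlonglongrightarrow> a"
    using BW1[of "\<lambda>j. X (\<sigma> j) n" M] Suc.prems by auto
  show ?case
  proof (intro exI conjI allI impI)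
    show "strict_mono (\<sigma> \<circ> \<tau>)" using \<sigma>(1) \<tau>(1) by (simp add: strict_mono_def)
    fix i assume "i < Suc n"
    show "(\<lambda>j. X ((\<sigma> \<circ> \<tau>) j) i) \<longlonglongrightarrow> (l(n := a)) i"
    proof (cases "i = n")
      case True then show ?thesis using \<tau>(2) by simp
    next
      case False
      then have "i < n" using \<open>i < Suc n\<close> by simp
      then show ?thesis using LIMSEQ_subseq_LIMSEQ[OF \<sigma>(2)[rule_format, OF \<open>i<n\<close>] \<tau>(1)] False
        by (simp add: comp_def)
    qed
  qed
qed


lemma brouwer_nat:
  fixes f :: "(nat \<Rightarrow> real) \<Rightarrow> (nat \<Rightarrow> real)" and n :: nat
  assumes maps: "\<And>x. \<forall>i<n. 0 \<le> x i \<and> x i \<le> 1 \<Longrightarrow> \<forall>i<n. 0 \<le> f x i \<and> f x i \<le> 1"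
  and cont: "\<And>X l. \<forall>j i. i<n \<longrightarrow> 0 \<le> X j i \<and> X j i \<le> 1 \<Longrightarrow> \<forall>i<n. 0 \<le> l i \<and> l i \<le> 1
      \<Longrightarrow> \<forall>i<n. (\<lambda>j. X j i) \<longlonglongrightarrow> l i \<Longrightarrow> \<forall>i<n. (\<lambda>j. f (X j) i) \<longlonglongrightarrow> f l i"
  shows "\<exists>x. (\<forall>i<n. 0 \<le> x i \<and> x i \<le> 1) \<and> (\<forall>i<n. f x i = x i)"
proof -
  define pt where "pt p q = (\<lambda>i. real (q i) / real p)" for p :: nat and q :: "nat \<Rightarrow> nat"
  define lab where "lab p q i = (if q i = 0 then 0 else if q i = p then 1
       else if pt p q i \<le> f (pt p q) i then 0 else (1::nat))" for p q i
  have inC: "\<forall>i<n. 0 \<le> pt p q i \<and> pt p q i \<le> 1" if "0 < p" "\<forall>i<n. q i \<le> p" for p q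
    using that by (auto simp: pt_def divide_le_eq_1)
  have lab01: "lab p q i = 0 \<or> lab p q i = 1" for p q i by (simp add: lab_def)
  have lab0: "pt p q i \<le> f (pt p q) i" if "0 < p" "\<forall>i<n. q i \<le> p" "i < n" "lab p q i = 0" for p q i
  proof -
    have "0 \<le> f (pt p q) i" using maps[OF inC[OF that(1,2)]] that(3) by auto
    then show ?thesis using that by (auto simp: lab_def pt_def split: if_splits)
  qed
  have lab1: "f (pt p q) i \<le> pt p q i" if "0 < p" "\<forall>i<n. q i \<le> p" "i < n" "lab p q i \<noteq> 0" for p q i
  proof -
    have "f (pt p q) i \<le> 1" using maps[OF inC[OF that(1,2)]] that(3) by auto
    then show ?thesis using that by (auto simp: lab_def pt_def split: if_splits)
  qed
  have "\<exists>q. (\<forall>i<n. q i < Suc j) \<and> (\<forall>i<n. \<exists>r s. (\<forall>k<n. q k \<le> r k \<and> r k \<le> q k + 1) \<and>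
          (\<forall>k<n. q k \<le> s k \<and> s k \<le> q k + 1) \<and> lab (Suc j) r i \<noteq> lab (Suc j) s i)" for j
  proof -
    have "0 < Suc j" by simp
    moreover have "\<forall>x. (\<forall>i<n. x i \<le> Suc j) \<longrightarrow> (\<forall>i<n. lab (Suc j) x i = 0 \<or> lab (Suc j) x i = 1)"
      using lab01 by blast
    moreover have "\<forall>x. (\<forall>i<n. x i \<le> Suc j) \<longrightarrow> (\<forall>i<n. x i = 0 \<longrightarrow> lab (Suc j) x i = 0)"
      by (simp add: lab_def)
    moreover have "\<forall>x. (\<forall>i<n. x i \<le> Suc j) \<longrightarrow> (\<forall>i<n. x i = Suc j \<longrightarrow> lab (Suc j) x i = 1)"
      by (simp add: lab_def)
    ultimately show ?thesis by (rule kuhn_lemma) blast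
  qed
  then have "\<forall>j. \<exists>q. (\<forall>i<n. q i < Suc j) \<and> (\<forall>i<n. \<exists>r s. (\<forall>k<n. q k \<le> r k \<and> r k \<le> q k + 1) \<and>
          (\<forall>k<n. q k \<le> s k \<and> s k \<le> q k + 1) \<and> lab (Suc j) r i \<noteq> lab (Suc j) s i)" by blast
  from choice[OF this] obtain Q where Q: "\<And>j. \<forall>i<n. Q j i < Suc j"
    "\<And>j. \<forall>i<n. \<exists>r s. (\<forall>k<n. Q j k \<le> r k \<and> r k \<le> Q j k + 1) \<and>
          (\<forall>k<n. Q j k \<le> s k \<and> s k \<le> Q j k + 1) \<and> lab (Suc j) r i \<noteq> lab (Suc j) s i"
    by blast
  have "\<forall>ji. \<exists>rs. snd ji < n \<longrightarrow> (\<forall>k<n. Q (fst ji) k \<le> fst rs k \<and> fst rs k \<le> Q (fst ji) k + 1) \<and>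
          (\<forall>k<n. Q (fst ji) k \<le> snd rs k \<and> snd rs k \<le> Q (fst ji) k + 1) \<and> lab (Suc (fst ji)) (fst rs) (snd ji) \<noteq> lab (Suc (fst ji)) (snd rs) (snd ji)"
  proof
    fix ji :: "nat \<times> nat"
    show "\<exists>rs. snd ji < n \<longrightarrow> (\<forall>k<n. Q (fst ji) k \<le> fst rs k \<and> fst rs k \<le> Q (fst ji) k + 1) \<and>
          (\<forall>k<n. Q (fst ji) k \<le> snd rs k \<and> snd rs k \<le> Q (fst ji) k + 1) \<and> lab (Suc (fst ji)) (fst rs) (snd ji) \<noteq> lab (Suc (fst ji)) (snd rs) (snd ji)"
    proof (cases "snd ji < n")
      case True
      then obtain r s where "(\<forall>k<n. Q (fst ji) k \<le> r k \<and> r k \<le> Q (fst ji) k + 1) \<and>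
          (\<forall>k<n. Q (fst ji) k \<le> s k \<and> s k \<le> Q (fst ji) k + 1) \<and> lab (Suc (fst ji)) r (snd ji) \<noteq> lab (Suc (fst ji)) s (snd ji)"
        using Q(2)[of "fst ji"] by blast
      then show ?thesis by (intro exI[of _ "(r,s)"]) simp
    qed simp
  qed
  from choice[OF this] obtain G where G: "\<And>ji. snd ji < n \<Longrightarrow> (\<forall>k<n. Q (fst ji) k \<le> fst (G ji) k \<and> fst (G ji) k \<le> Q (fst ji) k + 1) \<and>
          (\<forall>k<n. Q (fst ji) k \<le> snd (G ji) k \<and> snd (G ji) k \<le> Q (fst ji) k + 1) \<and> lab (Suc (fst ji)) (fst (G ji)) (snd ji) \<noteq> lab (Suc (fst ji)) (snd (G ji)) (snd ji)"
    by blast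
  define RR where "RR j i = fst (G (j,i))" for j i
  define SS where "SS j i = snd (G (j,i))" for j i
  have RS: "\<And>j i. i < n \<Longrightarrow> (\<forall>k<n. Q j k \<le> RR j i k \<and> RR j i k \<le> Q j k + 1) \<and>
          (\<forall>k<n. Q j k \<le> SS j i k \<and> SS j i k \<le> Q j k + 1) \<and> lab (Suc j) (RR j i) i \<noteq> lab (Suc j) (SS j i) i"
    unfolding RR_def SS_def using G by fastforce
  have Qle: "\<And>W j. (\<And>k. k < n \<Longrightarrow> W k \<le> Q j k + 1) \<Longrightarrow> \<forall>k<n. W k \<le> Suc j"
  proof (intro allI impI)
    fix W j k assume "\<And>k. k < n \<Longrightarrow> W k \<le> Q j k + 1" "k < n"
    moreover have "Q j k < Suc j" using Q(1) \<open>k<n\<close> by blast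
    ultimately show "W k \<le> Suc j" by fastforce
  qed
  define z where "z j = pt (Suc j) (Q j)" for j
  have zC: "\<forall>i<n. 0 \<le> z j i \<and> z j i \<le> 1" for j
    unfolding z_def using Q(1) by (intro inC) (auto simp: less_Suc_eq_le le_SucI)
  obtain \<sigma> l where \<sigma>: "strict_mono \<sigma>" "\<forall>i<n. (\<lambda>j. z (\<sigma> j) i) \<longlonglongrightarrow> l i"
    using BW_n[of n z 1] zC by fastforce
  have lC: "\<forall>i<n. 0 \<le> l i \<and> l i \<le> 1"
  proof (intro allI impI conjI)
    fix i assume i: "i < n"
    show "0 \<le> l i" using \<sigma>(2) i zC by (intro LIMSEQ_le_const[of "\<lambda>j. z (\<sigma> j) i"]) auto
    show "l i \<le> 1" using \<sigma>(2) i zC by (intro LIMSEQ_le_const2[of "\<lambda>j. z (\<sigma> j) i"]) auto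
  qed
  have eps: "(\<lambda>j. inverse (real (Suc (\<sigma> j)))) \<longlonglongrightarrow> 0"
    using LIMSEQ_subseq_LIMSEQ[OF LIMSEQ_inverse_real_of_nat \<sigma>(1)] by (simp add: comp_def)
  have near: "(\<lambda>j. pt (Suc (\<sigma> j)) (W j) k) \<longlonglongrightarrow> l k"
    if W: "\<And>j. Q (\<sigma> j) k \<le> W j k \<and> W j k \<le> Q (\<sigma> j) k + 1" and k: "k < n" for W k
  proof -
    have d: "(\<lambda>j. pt (Suc (\<sigma> j)) (W j) k - z (\<sigma> j) k) \<longlonglongrightarrow> 0"
    proof (rule tendsto_sandwich[of "\<lambda>j. 0" _ _ "\<lambda>j. inverse (real (Suc (\<sigma> j)))"])
      show "\<forall>\<^sub>F j in sequentially. 0 \<le> pt (Suc (\<sigma> j)) (W j) k - z (\<sigma> j) k"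
        using W by (auto simp: z_def pt_def divide_right_mono)
      show "\<forall>\<^sub>F j in sequentially. pt (Suc (\<sigma> j)) (W j) k - z (\<sigma> j) k \<le> inverse (real (Suc (\<sigma> j)))"
      proof (intro always_eventually allI)
        fix j
        have e: "pt (Suc (\<sigma> j)) (W j) k - z (\<sigma> j) k = (real (W j k) - real (Q (\<sigma> j) k)) / real (Suc (\<sigma> j))"
          by (simp add: pt_def z_def diff_divide_distrib)
        have "real (W j k) - real (Q (\<sigma> j) k) \<le> 1" using W[of j] by linarith
        then have "(real (W j k) - real (Q (\<sigma> j) k)) / real (Suc (\<sigma> j)) \<le> 1 / real (Suc (\<sigma> j))"
          by (intro divide_right_mono) auto
        then show "pt (Suc (\<sigma> j)) (W j) k - z (\<sigma> j) k \<le> inverse (real (Suc (\<sigma> j)))"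
          by (simp only: e inverse_eq_divide)
      qed
    qed (insert eps, simp_all)
    have "(\<lambda>j. z (\<sigma> j) k + (pt (Suc (\<sigma> j)) (W j) k - z (\<sigma> j) k)) \<longlonglongrightarrow> l k + 0"
      using \<sigma>(2) k d by (intro tendsto_add) auto
    then show ?thesis by simp
  qed
  have WC: "\<forall>i<n. 0 \<le> pt (Suc j) W i \<and> pt (Suc j) W i \<le> 1"
    if "\<And>k. k < n \<Longrightarrow> W k \<le> Q j k + 1" for W j
  proof (rule inC)
    show "\<forall>i<n. W i \<le> Suc j" using that by (rule Qle)
  qed simp
  have "f l i = l i" if i: "i < n" for i
  proof -
    define r where "r j = pt (Suc (\<sigma> j)) (RR (\<sigma> j) i)" for j
    define s where "s j = pt (Suc (\<sigma> j)) (SS (\<sigma> j) i)" for j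
    have rC: "\<forall>j k. k<n \<longrightarrow> 0 \<le> r j k \<and> r j k \<le> 1" unfolding r_def using RS[OF i] WC by blast
    have sC: "\<forall>j k. k<n \<longrightarrow> 0 \<le> s j k \<and> s j k \<le> 1" unfolding s_def using RS[OF i] WC by blast
    have rl: "\<forall>k<n. (\<lambda>j. r j k) \<longlonglongrightarrow> l k" unfolding r_def using RS[OF i] by (intro allI impI near) auto
    have sl: "\<forall>k<n. (\<lambda>j. s j k) \<longlonglongrightarrow> l k" unfolding s_def using RS[OF i] by (intro allI impI near) auto
    have fr: "(\<lambda>j. f (r j) i - r j i) \<longlonglongrightarrow> f l i - l i"
      using cont[OF rC lC rl] rl i by (intro tendsto_diff) auto
    have fs: "(\<lambda>j. f (s j) i - s j i) \<longlonglongrightarrow> f l i - l i"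
      using cont[OF sC lC sl] sl i by (intro tendsto_diff) auto
    have sgn: "min (f (r j) i - r j i) (f (s j) i - s j i) \<le> 0 \<and> 0 \<le> max (f (r j) i - r j i) (f (s j) i - s j i)" for j
    proof -
      have qle: "\<forall>k<n. RR (\<sigma> j) i k \<le> Suc (\<sigma> j)" "\<forall>k<n. SS (\<sigma> j) i k \<le> Suc (\<sigma> j)"
        using RS[OF i, of "\<sigma> j"] by (auto intro!: Qle)
      have ne: "lab (Suc (\<sigma> j)) (RR (\<sigma> j) i) i \<noteq> lab (Suc (\<sigma> j)) (SS (\<sigma> j) i) i"
        using RS[OF i] by blast
      show ?thesis
      proof (cases "lab (Suc (\<sigma> j)) (RR (\<sigma> j) i) i = 0")
        case True
        then have "lab (Suc (\<sigma> j)) (SS (\<sigma> j) i) i \<noteq> 0" using ne by simp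
        then show ?thesis using True lab0[OF _ qle(1) i] lab1[OF _ qle(2) i] by (auto simp: r_def s_def)
      next
        case False
        then have "lab (Suc (\<sigma> j)) (SS (\<sigma> j) i) i = 0" using ne lab01[of "Suc (\<sigma> j)" "RR (\<sigma> j) i" i] lab01[of "Suc (\<sigma> j)" "SS (\<sigma> j) i" i] by simp
        then show ?thesis using False lab1[OF _ qle(1) i] lab0[OF _ qle(2) i] by (auto simp: r_def s_def)
      qed
    qed
    have "min (f l i - l i) (f l i - l i) \<le> 0"
      using sgn by (intro LIMSEQ_le_const2[OF tendsto_min[OF fr fs]]) auto
    moreover have "0 \<le> max (f l i - l i) (f l i - l i)"
      using sgn by (intro LIMSEQ_le_const[OF tendsto_max[OF fr fs]]) auto
    ultimately show ?thesis by simp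
  qed
  then show ?thesis using lC by blast
qed


definition Tx :: "nat \<Rightarrow> nat \<Rightarrow> (nat list \<Rightarrow> real) \<Rightarrow> (nat \<Rightarrow> real) \<Rightarrow> nat \<Rightarrow> real" where
  "Tx p n T x i = (\<Sum>is\<in>indices n (p - 1). T (i # is) * (\<Prod>j<p - 1. x (is ! j)))"

lemma nth_indices: assumes "is \<in> indices n d" "j < d" shows "is ! j < n"
proof -
  have "is ! j \<in> set is" using assms by (simp add: indices_def)
  moreover have "set is \<subseteq> {..<n}" using assms by (simp add: indices_def)
  ultimately show ?thesis by blast
qed

lemma prod_lower:
  fixes x :: "nat \<Rightarrow> real"
  assumes "is \<in> indices n d" "\<And>k. k < n \<Longrightarrow> a \<le> x k" "0 \<le> a"
  shows "a ^ d \<le> (\<Prod>j<d. x (is ! j))"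
proof -
  have "\<forall>j\<in>{..<d}. 0 \<le> a \<and> a \<le> x (is ! j)"
    using assms nth_indices[OF assms(1)] by auto
  then have "(\<Prod>j<d. a) \<le> (\<Prod>j<d. x (is ! j))" by (intro prod_mono) blast
  then show ?thesis by simp
qed

lemma prod_upper:
  fixes x :: "nat \<Rightarrow> real"
  assumes "is \<in> indices n d" "\<And>k. k < n \<Longrightarrow> 0 \<le> x k \<and> x k \<le> b"
  shows "(\<Prod>j<d. x (is ! j)) \<le> b ^ d"
proof -
  have "\<forall>j\<in>{..<d}. 0 \<le> x (is ! j) \<and> x (is ! j) \<le> b"
    using assms nth_indices[OF assms(1)] by auto
  then have "(\<Prod>j<d. x (is ! j)) \<le> (\<Prod>j<d. b)" by (intro prod_mono) blast
  then show ?thesis by simp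
qed

lemma row_sum_nonneg_eq:
  assumes "\<forall>is\<in>indices n (p-1). 0 \<le> T (i # is)"
  shows "row_sum p n T i = (\<Sum>is\<in>indices n (p-1). T (i # is))"
  unfolding row_sum_def using assms by (intro sum.cong) auto

lemma row_sum_ge0: "0 \<le> row_sum p n T i"
  unfolding row_sum_def by (intro sum_nonneg) auto

lemma min_row_sum_le: "i < n \<Longrightarrow> min_row_sum p n T \<le> row_sum p n T i"
  unfolding min_row_sum_def by (intro Min_le) auto

lemma max_row_sum_ge: "i < n \<Longrightarrow> row_sum p n T i \<le> max_row_sum p n T"
  unfolding max_row_sum_def by (intro Max_ge) auto

lemma min_row_sum_ge0: "0 < n \<Longrightarrow> 0 \<le> min_row_sum p n T"
  unfolding min_row_sum_def using row_sum_ge0 by (subst Min_ge_iff) auto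

lemma Tx_tendsto:
  assumes "\<forall>k<n. (\<lambda>j. X j k) \<longlonglongrightarrow> l k"
  shows "(\<lambda>j. Tx p n T (X j) i) \<longlonglongrightarrow> Tx p n T l i"
  unfolding Tx_def
  using assms nth_indices by (intro tendsto_sum tendsto_mult tendsto_const tendsto_prod) blast

lemma Tx_nonneg:
  assumes "\<forall>is\<in>indices n (p-1). 0 \<le> T (i # is)" "\<forall>k<n. 0 \<le> x k"
  shows "0 \<le> Tx p n T x i"
  unfolding Tx_def using assms nth_indices
  by (intro sum_nonneg mult_nonneg_nonneg prod_nonneg) auto

lemma Tx_lower:
  assumes "\<forall>is\<in>indices n (p-1). 0 \<le> T (i # is)" "\<forall>k<n. a \<le> x k" "0 \<le> a"
  shows "row_sum p n T i * a ^ (p-1) \<le> Tx p n T x i"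
  unfolding Tx_def row_sum_nonneg_eq[OF assms(1)] sum_distrib_right
  using assms prod_lower[of _ n "p-1" a x] by (intro sum_mono mult_left_mono) auto

lemma Tx_upper:
  assumes "\<forall>is\<in>indices n (p-1). 0 \<le> T (i # is)" "\<forall>k<n. 0 \<le> x k \<and> x k \<le> b"
  shows "Tx p n T x i \<le> row_sum p n T i * b ^ (p-1)"
  unfolding Tx_def row_sum_nonneg_eq[OF assms(1)] sum_distrib_right
  using assms prod_upper[of _ n "p-1" x b] by (intro sum_mono mult_left_mono) auto


lemma powr_pow_inv:
  fixes a :: real assumes "0 < a" "1 \<le> d"
  shows "(a powr (1 / real d)) ^ d = a"
proof -
  have "(a powr (1 / real d)) ^ d = (a powr (1 / real d)) powr (real d)"
    using assms by (simp add: powr_realpow)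
  also have "\<dots> = a powr (1 / real d * real d)" by (simp add: powr_powr)
  also have "\<dots> = a" using assms by simp
  finally show ?thesis .
qed

lemma eig_eps:
  fixes T :: "nat list \<Rightarrow> real" and \<epsilon> :: real
  assumes p: "2 \<le> p" and n: "1 \<le> n" and nn: "\<forall>i<n. \<forall>is\<in>indices n (p-1). 0 \<le> T (i # is)"
    and e: "0 < \<epsilon>" "\<epsilon> \<le> 1"
  shows "\<exists>lam x. (\<forall>i<n. 0 \<le> x i \<and> x i \<le> 1) \<and> (\<Sum>i<n. x i) = 1 \<and> min_row_sum p n T \<le> lam
     \<and> lam \<le> (max_row_sum p n T + 1) * real n ^ (p-1) \<and> (\<forall>i<n. Tx p n T x i + \<epsilon> = lam * x i ^ (p-1))"
proof -
  define d where "d = p - 1"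
  have d: "1 \<le> d" using p by (simp add: d_def)
  define y where "y x i = (Tx p n T x i + \<epsilon>) powr (1 / real d)" for x i
  define S where "S x = (\<Sum>i<n. y x i)" for x
  define F where "F x = (\<lambda>i. y x i / S x)" for x
  have basepos: "0 < Tx p n T x i + \<epsilon>" if "\<forall>k<n. 0 \<le> x k" "i < n" for x i
    using Tx_nonneg[of n p T i x] nn that e by fastforce
  have ypos: "0 < y x i" if "\<forall>k<n. 0 \<le> x k" "i < n" for x i
    unfolding y_def using basepos[OF that] by simp
  have Spos: "0 < S x" if "\<forall>k<n. 0 \<le> x k" for x
    unfolding S_def using ypos[OF that] n by (intro sum_pos) (auto simp: lessThan_empty_iff)
  have yle: "y x i \<le> S x" if "\<forall>k<n. 0 \<le> x k" "i < n" for x i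
    unfolding S_def using ypos[OF that(1)] that(2) by (intro member_le_sum) (auto intro: less_imp_le)
  have maps: "\<forall>i<n. 0 \<le> F x i \<and> F x i \<le> 1" if "\<forall>i<n. 0 \<le> x i \<and> x i \<le> 1" for x
  proof -
    have x0: "\<forall>k<n. 0 \<le> x k" using that by auto
    show ?thesis unfolding F_def using ypos[OF x0] Spos[OF x0] yle[OF x0]
      by (auto simp: divide_le_eq_1 less_imp_le)
  qed
  have cont: "\<forall>i<n. (\<lambda>j. F (X j) i) \<longlonglongrightarrow> F l i"
    if X: "\<forall>j i. i<n \<longrightarrow> 0 \<le> X j i \<and> X j i \<le> 1" and l: "\<forall>i<n. 0 \<le> l i \<and> l i \<le> 1"
      and lim: "\<forall>i<n. (\<lambda>j. X j i) \<longlonglongrightarrow> l i" for X l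
  proof -
    have l0: "\<forall>k<n. 0 \<le> l k" using l by auto
    have yl: "(\<lambda>j. y (X j) i) \<longlonglongrightarrow> y l i" if "i < n" for i
      unfolding y_def
      using basepos[OF l0 that] Tx_tendsto[OF lim, of p T i]
      by (intro tendsto_powr tendsto_add tendsto_const) auto
    have Sl: "(\<lambda>j. S (X j)) \<longlonglongrightarrow> S l"
      unfolding S_def using yl by (intro tendsto_sum) auto
    show ?thesis unfolding F_def using yl Sl Spos[OF l0]
      by (auto intro!: tendsto_divide)
  qed
  obtain x where xC: "\<forall>i<n. 0 \<le> x i \<and> x i \<le> 1" and fx: "\<forall>i<n. F x i = x i"
    using brouwer_nat[of n F, OF maps cont] by blast
  have x0: "\<forall>k<n. 0 \<le> x k" using xC by auto
  have xy: "y x i = S x * x i" if "i < n" for i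
    using fx that Spos[OF x0] by (auto simp: F_def field_simps)
  have xpos: "0 < x i" if "i < n" for i
  proof -
    have "x i = y x i / S x" using fx that by (simp add: F_def)
    then show ?thesis using Spos[OF x0] ypos[OF x0 that] by simp
  qed
  have sum1: "(\<Sum>i<n. x i) = 1"
  proof -
    have "(\<Sum>i<n. x i) = (\<Sum>i<n. y x i / S x)" using fx by (auto simp: F_def)
    also have "\<dots> = S x / S x" unfolding S_def by (rule sum_divide_distrib[symmetric])
    also have "\<dots> = 1" using Spos[OF x0] by simp
    finally show ?thesis .
  qed
  define lam where "lam = S x ^ d"
  have lampos: "0 < lam" unfolding lam_def using Spos[OF x0] by simp
  have eq: "Tx p n T x i + \<epsilon> = lam * x i ^ d" if "i < n" for i
  proof -
    have "Tx p n T x i + \<epsilon> = y x i ^ d"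
      unfolding y_def using powr_pow_inv[OF basepos[OF x0 that] d] by simp
    also have "\<dots> = lam * x i ^ d" using xy[OF that] by (simp add: lam_def power_mult_distrib)
    finally show ?thesis .
  qed
  define m where "m = Min (x ` {..<n})"
  have "m \<in> x ` {..<n}" unfolding m_def using n by (intro Min_in) (auto simp: lessThan_empty_iff)
  then obtain i0 where i0: "i0 < n" "x i0 = m" by auto
  have mle: "\<forall>k<n. x i0 \<le> x k" using i0 unfolding m_def by (auto intro: Min_le)
  have low: "min_row_sum p n T \<le> lam"
  proof -
    have "min_row_sum p n T * x i0 ^ d \<le> row_sum p n T i0 * x i0 ^ d"
      using min_row_sum_le[OF i0(1)] x0 i0 by (intro mult_right_mono) auto
    also have "\<dots> \<le> Tx p n T x i0"
      unfolding d_def using Tx_lower[of n p T i0 "x i0" x] nn i0 mle x0 by auto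
    also have "\<dots> < lam * x i0 ^ d" using eq[OF i0(1)] e by linarith
    finally have "min_row_sum p n T * x i0 ^ d < lam * x i0 ^ d" .
    then show ?thesis using xpos[OF i0(1)] by (auto dest: mult_right_less_imp_less)
  qed
  define M where "M = Max (x ` {..<n})"
  have "M \<in> x ` {..<n}" unfolding M_def using n by (intro Max_in) (auto simp: lessThan_empty_iff)
  then obtain i1 where i1: "i1 < n" "x i1 = M" by auto
  have Mge: "\<forall>k<n. x k \<le> x i1" using i1 unfolding M_def by (auto intro: Max_ge)
  have "1 \<le> real n * x i1"
  proof -
    have "1 = (\<Sum>i<n. x i)" using sum1 by simp
    also have "\<dots> \<le> (\<Sum>i<n. x i1)" using Mge by (intro sum_mono) auto
    finally show ?thesis by simp
  qed
  then have inv: "1 / x i1 \<le> real n" using xpos[OF i1(1)] by (simp add: divide_le_eq mult.commute)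
  have up1: "lam * x i1 ^ d \<le> max_row_sum p n T + 1"
  proof -
    have "Tx p n T x i1 \<le> row_sum p n T i1 * 1 ^ d"
      unfolding d_def using Tx_upper[of n p T i1 x 1] nn i1 xC by auto
    also have "\<dots> \<le> max_row_sum p n T" using max_row_sum_ge[OF i1(1)] by simp
    finally show ?thesis using eq[OF i1(1)] e by linarith
  qed
  have up: "lam \<le> (max_row_sum p n T + 1) * real n ^ d"
  proof -
    have "lam = (lam * x i1 ^ d) * (1 / x i1) ^ d"
      using xpos[OF i1(1)] by (simp add: power_divide)
    also have "\<dots> \<le> (max_row_sum p n T + 1) * real n ^ d"
      using up1 inv xpos[OF i1(1)] lampos order_trans[OF row_sum_ge0 max_row_sum_ge[OF i1(1)]]
      by (intro mult_mono power_mono) auto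
    finally show ?thesis .
  qed
  show ?thesis
    using xC sum1 low up eq unfolding d_def by blast
qed


lemma eig_exists:
  fixes T :: "nat list \<Rightarrow> real"
  assumes p: "2 \<le> p" and n: "1 \<le> n" and nn: "\<forall>i<n. \<forall>is\<in>indices n (p-1). 0 \<le> T (i # is)"
  shows "\<exists>Lam l. min_row_sum p n T \<le> Lam \<and> (\<forall>i<n. 0 \<le> l i) \<and> (\<Sum>i<n. l i) = 1
     \<and> (\<forall>i<n. Tx p n T l i = Lam * l i ^ (p-1))"
proof -
  define eps where "eps j = inverse (real (Suc j))" for j
  define Rb where "Rb = (max_row_sum p n T + 1) * real n ^ (p-1)"
  define r where "r = min_row_sum p n T"
  have r0: "0 \<le> r" unfolding r_def using n by (intro min_row_sum_ge0) simp
  have "\<forall>j. \<exists>lx. (\<forall>i<n. 0 \<le> snd lx i \<and> snd lx i \<le> 1) \<and> (\<Sum>i<n. snd lx i) = 1 \<and> r \<le> fst lx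
     \<and> fst lx \<le> Rb \<and> (\<forall>i<n. Tx p n T (snd lx) i + eps j = fst lx * snd lx i ^ (p-1))"
  proof
    fix j
    have "0 < eps j" "eps j \<le> 1" by (auto simp: eps_def inverse_le_1_iff)
    from eig_eps[OF p n nn this] show "\<exists>lx. (\<forall>i<n. 0 \<le> snd lx i \<and> snd lx i \<le> 1) \<and> (\<Sum>i<n. snd lx i) = 1 \<and> r \<le> fst lx
     \<and> fst lx \<le> Rb \<and> (\<forall>i<n. Tx p n T (snd lx) i + eps j = fst lx * snd lx i ^ (p-1))"
      unfolding r_def Rb_def by (metis fst_conv snd_conv)
  qed
  from choice[OF this] obtain G where G: "\<And>j. (\<forall>i<n. 0 \<le> snd (G j) i \<and> snd (G j) i \<le> 1) \<and> (\<Sum>i<n. snd (G j) i) = 1 \<and> r \<le> fst (G j)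
     \<and> fst (G j) \<le> Rb \<and> (\<forall>i<n. Tx p n T (snd (G j)) i + eps j = fst (G j) * snd (G j) i ^ (p-1))"
    by blast
  define lam where "lam j = fst (G j)" for j
  define x where "x j = snd (G j)" for j
  define Z where "Z j = (x j)(n := lam j)" for j
  have bound: "\<bar>Z j i\<bar> \<le> max 1 Rb" if "i < Suc n" for j i
  proof (cases "i = n")
    case True
    then show ?thesis using G[of j] r0 by (auto simp: Z_def lam_def)
  next
    case False
    then have "i < n" using that by simp
    then show ?thesis using G[of j] False by (auto simp: Z_def x_def)
  qed
  obtain \<sigma> L where \<sigma>: "strict_mono \<sigma>" "\<forall>i<Suc n. (\<lambda>j. Z (\<sigma> j) i) \<longlonglongrightarrow> L i"
    using BW_n[of "Suc n" Z "max 1 Rb"] bound by blast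
  have xl: "\<forall>i<n. (\<lambda>j. x (\<sigma> j) i) \<longlonglongrightarrow> L i"
  proof (intro allI impI)
    fix i assume "i < n"
    then have "(\<lambda>j. Z (\<sigma> j) i) \<longlonglongrightarrow> L i" using \<sigma>(2) by simp
    then show "(\<lambda>j. x (\<sigma> j) i) \<longlonglongrightarrow> L i" using \<open>i<n\<close> by (simp add: Z_def)
  qed
  have ll: "(\<lambda>j. lam (\<sigma> j)) \<longlonglongrightarrow> L n" using \<sigma>(2)[rule_format, of n] by (simp add: Z_def)
  have epsl: "(\<lambda>j. eps (\<sigma> j)) \<longlonglongrightarrow> 0"
    using LIMSEQ_subseq_LIMSEQ[OF LIMSEQ_inverse_real_of_nat \<sigma>(1)] by (simp add: comp_def eps_def)
  have L0: "\<forall>i<n. 0 \<le> L i"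
  proof (intro allI impI)
    fix i assume "i < n"
    then show "0 \<le> L i" using xl G by (intro LIMSEQ_le_const[of "\<lambda>j. x (\<sigma> j) i"]) (auto simp: x_def)
  qed
  have Lsum: "(\<Sum>i<n. L i) = 1"
  proof -
    have "(\<lambda>j. \<Sum>i<n. x (\<sigma> j) i) \<longlonglongrightarrow> (\<Sum>i<n. L i)" using xl by (intro tendsto_sum) auto
    moreover have "(\<lambda>j. \<Sum>i<n. x (\<sigma> j) i) = (\<lambda>j. 1)" using G by (auto simp: x_def)
    ultimately show ?thesis using LIMSEQ_unique tendsto_const by metis
  qed
  have Lr: "r \<le> L n" using ll G by (intro LIMSEQ_le_const[OF ll]) (auto simp: lam_def)
  have Leq: "Tx p n T L i = L n * L i ^ (p-1)" if "i < n" for i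
  proof -
    have "(\<lambda>j. Tx p n T (x (\<sigma> j)) i + eps (\<sigma> j)) \<longlonglongrightarrow> Tx p n T L i + 0"
      by (intro tendsto_add Tx_tendsto xl epsl)
    moreover have "(\<lambda>j. Tx p n T (x (\<sigma> j)) i + eps (\<sigma> j)) = (\<lambda>j. lam (\<sigma> j) * x (\<sigma> j) i ^ (p-1))"
      using G that by (auto simp: x_def lam_def)
    moreover have "(\<lambda>j. lam (\<sigma> j) * x (\<sigma> j) i ^ (p-1)) \<longlonglongrightarrow> L n * L i ^ (p-1)"
      using xl that by (intro tendsto_mult tendsto_power ll) auto
    ultimately show ?thesis using LIMSEQ_unique by fastforce
  qed
  show ?thesis using Lr L0 Lsum Leq unfolding r_def by blast
qed

lemma eig_upper:
  fixes T :: "nat list \<Rightarrow> real"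
  assumes nn: "\<forall>i<n. \<forall>is\<in>indices n (p-1). 0 \<le> T (i # is)"
    and ev: "tensor_eigenvalue p n T lam"
  shows "cmod lam \<le> max_row_sum p n T"
proof -
  obtain x i where i: "i < n" "x i \<noteq> 0" and eq: "\<forall>i<n. (\<Sum>is\<in>indices n (p - 1). complex_of_real (T (i # is)) * (\<Prod>j<p - 1. x (is ! j)))
               = lam * x i ^ (p - 1)"
    using ev unfolding tensor_eigenvalue_def by blast
  define M where "M = Max ((\<lambda>k. cmod (x k)) ` {..<n})"
  have "M \<in> (\<lambda>k. cmod (x k)) ` {..<n}" unfolding M_def using i by (intro Max_in) auto
  then obtain i0 where i0: "i0 < n" "cmod (x i0) = M" by auto
  have Mge: "\<forall>k<n. cmod (x k) \<le> M" unfolding M_def by (auto intro: Max_ge)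
  have Mpos: "0 < M" using Mge i by (meson norm_ge_zero order_less_le_trans zero_less_norm_iff)
  have "cmod lam * M ^ (p-1) = cmod (lam * x i0 ^ (p-1))" using i0 by (simp add: norm_mult norm_power)
  also have "\<dots> = cmod (\<Sum>is\<in>indices n (p - 1). complex_of_real (T (i0 # is)) * (\<Prod>j<p - 1. x (is ! j)))"
    using eq i0 by simp
  also have "\<dots> \<le> (\<Sum>is\<in>indices n (p - 1). cmod (complex_of_real (T (i0 # is)) * (\<Prod>j<p - 1. x (is ! j))))"
    by (rule norm_sum)
  also have "\<dots> \<le> (\<Sum>is\<in>indices n (p - 1). T (i0 # is) * M ^ (p-1))"
  proof (rule sum_mono)
    fix "is" assume is_in: "is \<in> indices n (p - 1)"
    have "cmod (\<Prod>j<p - 1. x (is ! j)) \<le> (\<Prod>j<p - 1. cmod (x (is ! j)))" by (rule norm_prod_le)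
    also have "\<dots> \<le> M ^ (p-1)" using prod_upper[OF is_in, of "\<lambda>k. cmod (x k)" M] Mge by auto
    finally have "cmod (\<Prod>j<p - 1. x (is ! j)) \<le> M ^ (p-1)" .
    then show "cmod (complex_of_real (T (i0 # is)) * (\<Prod>j<p - 1. x (is ! j))) \<le> T (i0 # is) * M ^ (p-1)"
      using nn i0 is_in by (auto simp: norm_mult intro: mult_left_mono)
  qed
  also have "\<dots> = row_sum p n T i0 * M ^ (p-1)"
    using row_sum_nonneg_eq[of n p T i0] nn i0 by (simp add: sum_distrib_right)
  also have "\<dots> \<le> max_row_sum p n T * M ^ (p-1)"
    using max_row_sum_ge[OF i0(1)] Mpos by (intro mult_right_mono) auto
  finally show ?thesis using Mpos by (auto dest: mult_right_le_imp_le)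
qed

lemma spectral_bounds:
  fixes T :: "nat list \<Rightarrow> real"
  assumes p: "2 \<le> p" and n: "1 \<le> n" and nn: "\<forall>i<n. \<forall>is\<in>indices n (p-1). 0 \<le> T (i # is)"
  shows "min_row_sum p n T \<le> tensor_spectral_radius p n T \<and> tensor_spectral_radius p n T \<le> max_row_sum p n T"
proof -
  obtain Lam l where L: "min_row_sum p n T \<le> Lam" "\<forall>i<n. 0 \<le> l i" "(\<Sum>i<n. l i) = 1"
     "\<forall>i<n. Tx p n T l i = Lam * l i ^ (p-1)"
    using eig_exists[OF p n nn] by blast
  have "\<exists>i<n. l i \<noteq> 0"
  proof (rule ccontr)
    assume "\<not> ?thesis"
    then have "(\<Sum>i<n. l i) = 0" by simp
    then show False using L(3) by simp
  qed
  then have ev: "tensor_eigenvalue p n T (complex_of_real Lam)"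
    unfolding tensor_eigenvalue_def
    using L(4)
    by (intro exI[of _ "\<lambda>i. complex_of_real (l i)"] conjI)
       (auto simp: Tx_def simp flip: of_real_mult of_real_prod of_real_sum of_real_power)
  define E where "E = cmod ` {lam. tensor_eigenvalue p n T lam}"
  have bdd: "\<forall>e\<in>E. e \<le> max_row_sum p n T" unfolding E_def using eig_upper[OF nn] by auto
  have inE: "Lam \<in> E"
  proof -
    have "0 \<le> Lam" using L(1) min_row_sum_ge0[of n p T] n by linarith
    then show ?thesis unfolding E_def using ev by (intro image_eqI[of _ _ "complex_of_real Lam"]) auto
  qed
  have "Lam \<le> Sup E" using inE bdd by (intro cSup_upper) (auto simp: bdd_above_def)
  moreover have "Sup E \<le> max_row_sum p n T" using inE bdd by (intro cSup_least) auto
  ultimately show ?thesis using L(1) unfolding tensor_spectral_radius_def E_def[symmetric] by linarith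
qed


lemma chunk_indices:
  assumes "xs \<in> indices n (c*l)" "j < c"
  shows "chunk l xs j \<in> indices n l"
proof -
  have "Suc j * l \<le> c * l" using assms(2) by (intro mult_le_mono1) simp
  then have "l \<le> c * l - j * l" by simp
  then have "length (chunk l xs j) = l" using assms(1) by (simp add: chunk_def indices_def)
  moreover have "set (chunk l xs j) \<subseteq> set xs" unfolding chunk_def
    by (meson order_trans set_drop_subset set_take_subset)
  ultimately show ?thesis using assms(1) by (auto simp: indices_def)
qed

theorem theorem4p1:
  fixes m k n :: nat and A B :: "nat list \<Rightarrow> real"
  assumes "m \<ge> 2" and "k \<ge> 2" and "n \<ge> 1"
    and "nonneg_tensor m n A" and "nonneg_tensor k n B"
  shows "min_row_sum m n A * (min_row_sum k n B) ^ (m - 1)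
           \<le> tensor_spectral_radius ((m - 1) * (k - 1) + 1) n (gen_prod m k n A B)
       \<and> tensor_spectral_radius ((m - 1) * (k - 1) + 1) n (gen_prod m k n A B)
           \<le> max_row_sum m n A * (max_row_sum k n B) ^ (m - 1)"
proof -
  define P where "P = gen_prod m k n A B"
  define q where "q = (m - 1) * (k - 1) + 1"
  have q1: "q - 1 = (m - 1) * (k - 1)" by (simp add: q_def)
  have q2: "2 \<le> q" using assms(1,2) by (simp add: q_def; linarith)
  have nnA: "\<forall>i<n. \<forall>is\<in>indices n (m-1). 0 \<le> A (i # is)"
  proof (intro allI impI ballI)
    fix i "is" assume "i < n" "is \<in> indices n (m-1)"
    then have "i # is \<in> indices n m" using assms(1) by (auto simp: indices_def)
    then show "0 \<le> A (i # is)" using assms(4) by (auto simp: nonneg_tensor_def)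
  qed
  have nnB: "\<forall>i<n. \<forall>is\<in>indices n (k-1). 0 \<le> B (i # is)"
  proof (intro allI impI ballI)
    fix i "is" assume "i < n" "is \<in> indices n (k-1)"
    then have "i # is \<in> indices n k" using assms(2) by (auto simp: indices_def)
    then show "0 \<le> B (i # is)" using assms(5) by (auto simp: nonneg_tensor_def)
  qed
  have Pdef: "P (i # xs) = (\<Sum>is\<in>indices n (m - 1).
        A (i # is) * (\<Prod>j<m - 1. B ((is ! j) # chunk (k - 1) xs j)))" for i xs
    by (simp add: P_def gen_prod_def)
  have nnP: "\<forall>i<n. \<forall>xs\<in>indices n (q-1). 0 \<le> P (i # xs)"
  proof (intro allI impI ballI)
    fix i xs assume i: "i < n" and xs: "xs \<in> indices n (q-1)"
    show "0 \<le> P (i # xs)" unfolding Pdef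
    proof (intro sum_nonneg mult_nonneg_nonneg prod_nonneg)
      fix "is" assume is_in: "is \<in> indices n (m-1)"
      show "0 \<le> A (i # is)" using nnA i is_in by blast
      fix j assume "j \<in> {..<m-1}"
      then show "0 \<le> B ((is ! j) # chunk (k - 1) xs j)"
        using nnB nth_indices[OF is_in] chunk_indices[of xs n "m-1" "k-1" j] xs q1 by auto
    qed
  qed
  define rA where "rA = min_row_sum m n A"
  define RA where "RA = max_row_sum m n A"
  define rB where "rB = min_row_sum k n B"
  define RB where "RB = max_row_sum k n B"
  have rowP: "row_sum q n P i = (\<Sum>is\<in>indices n (m-1). A (i # is) * (\<Prod>j<m-1. row_sum k n B (is ! j)))"
    if i: "i < n" for i
  proof -
    have "row_sum q n P i = (\<Sum>xs\<in>indices n ((m-1)*(k-1)). P (i # xs))"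
      using row_sum_nonneg_eq[of n q P i] nnP i q1 by simp
    also have "\<dots> = (\<Sum>is\<in>indices n (m-1). A (i # is) *
        (\<Sum>xs\<in>indices n ((m-1)*(k-1)). \<Prod>j<m-1. B ((is ! j) # chunk (k - 1) xs j)))"
      unfolding Pdef by (subst sum.swap) (simp add: sum_distrib_left)
    also have "\<dots> = (\<Sum>is\<in>indices n (m-1). A (i # is) * (\<Prod>j<m-1. row_sum k n B (is ! j)))"
    proof (rule sum.cong[OF refl])
      fix "is" assume is_in: "is \<in> indices n (m-1)"
      have "(\<Sum>xs\<in>indices n ((m-1)*(k-1)). \<Prod>j<m-1. B ((is ! j) # chunk (k - 1) xs j))
          = (\<Prod>j<m-1. \<Sum>zs\<in>indices n (k-1). B ((is ! j) # zs))"
        by (rule chunk_sum)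
      also have "\<dots> = (\<Prod>j<m-1. row_sum k n B (is ! j))"
        using row_sum_nonneg_eq nnB nth_indices[OF is_in] by (intro prod.cong) auto
      finally show "A (i # is) * (\<Sum>xs\<in>indices n ((m-1)*(k-1)). \<Prod>j<m-1. B ((is ! j) # chunk (k - 1) xs j))
         = A (i # is) * (\<Prod>j<m-1. row_sum k n B (is ! j))" by simp
    qed
    finally show ?thesis .
  qed
  have rB0: "0 \<le> rB" unfolding rB_def using assms(3) by (intro min_row_sum_ge0) simp
  have lowP: "rA * rB ^ (m-1) \<le> row_sum q n P i" if i: "i < n" for i
  proof -
    have "rA * rB ^ (m-1) \<le> row_sum m n A i * rB ^ (m-1)"
      unfolding rA_def using min_row_sum_le[OF i] rB0 by (intro mult_right_mono) auto
    also have "\<dots> = (\<Sum>is\<in>indices n (m-1). A (i # is) * rB ^ (m-1))"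
      using row_sum_nonneg_eq[of n m A i] nnA i by (simp add: sum_distrib_right)
    also have "\<dots> \<le> (\<Sum>is\<in>indices n (m-1). A (i # is) * (\<Prod>j<m-1. row_sum k n B (is ! j)))"
      using nnA i prod_lower[of _ n "m-1" rB "row_sum k n B"] rB0 min_row_sum_le
      unfolding rB_def by (intro sum_mono mult_left_mono) auto
    finally show ?thesis using rowP[OF i] by simp
  qed
  have upP: "row_sum q n P i \<le> RA * RB ^ (m-1)" if i: "i < n" for i
  proof -
    have "row_sum q n P i \<le> (\<Sum>is\<in>indices n (m-1). A (i # is) * RB ^ (m-1))"
      unfolding rowP[OF i]
      using nnA i prod_upper[of _ n "m-1" "row_sum k n B" RB] row_sum_ge0 max_row_sum_ge
      unfolding RB_def by (intro sum_mono mult_left_mono) auto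
    also have "\<dots> = row_sum m n A i * RB ^ (m-1)"
      using row_sum_nonneg_eq[of n m A i] nnA i by (simp add: sum_distrib_right)
    also have "\<dots> \<le> RA * RB ^ (m-1)"
      unfolding RA_def using max_row_sum_ge[OF i] order_trans[OF row_sum_ge0 max_row_sum_ge[OF i]]
      by (intro mult_right_mono) (auto simp: RB_def)
    finally show ?thesis .
  qed
  have ne: "{..<n} \<noteq> {}" using assms(3) by (auto simp: lessThan_empty_iff)
  have "rA * rB ^ (m-1) \<le> min_row_sum q n P"
    unfolding min_row_sum_def using ne lowP by (subst Min_ge_iff) auto
  moreover have "max_row_sum q n P \<le> RA * RB ^ (m-1)"
    unfolding max_row_sum_def using ne upP by (subst Max_le_iff) auto
  moreover have "min_row_sum q n P \<le> tensor_spectral_radius q n P \<and> tensor_spectral_radius q n P \<le> max_row_sum q n P"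
    using spectral_bounds[OF q2 assms(3) nnP] .
  ultimately show ?thesis unfolding P_def q_def rA_def rB_def RA_def RB_def by linarith
qed

end
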